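(* Let $k \ge 2$ and $E \ge 1$ be integers, and let $n_{k,E}$ be the smallest positive integer $n$ such that for every subset $S \subseteq \{0,\dots,n-1\}$ with at most $E$ elements there exist integers $r \ge 0$ and $s > 0$ with $r + s(k-1) \le n-1$ and $r + is \notin S$ for all $0 \le i \le k-1$. Then $n_{k,E} \le k(E+1)$, and $n_{k,E} = k(E+1)$ if and only if $E + 2 \le g$, where $g$ is the smallest prime factor of $k$.
   Context: $n_{k,E}$ is the minimum length of a sequence such that, whatever the positions of at most $E$ errors, some arithmetic progression of $k$ indices inside $\{0,\dots,n-1\}$ avoids all error positions. *)

theory Defs
  imports "HOL-Computational_Algebra.Primes"
begin

definition ap_avoid :: "nat \<Rightarrow> nat \<Rightarrow> nat \<Rightarrow> bool" where
  "ap_avoid k E n \<longleftrightarrow>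
     (\<forall>S. S \<subseteq> {0..<n} \<and> card S \<le> E \<longrightarrow>
        (\<exists>r s. s > 0 \<and> r + s * (k - 1) \<le> n - 1 \<and> (\<forall>i. i \<le> k - 1 \<longrightarrow> r + i * s \<notin> S)))"

definition n_kE :: "nat \<Rightarrow> nat \<Rightarrow> nat" where
  "n_kE k E = (LEAST n. n > 0 \<and> ap_avoid k E n)"

definition smallest_prime_factor :: "nat \<Rightarrow> nat" where
  "smallest_prime_factor k = (LEAST p. prime p \<and> p dvd k)"

end

theory Submission
  imports Defs
begin

lemma window_count:
  fixes S :: "nat set"
  assumes fin: "finite S"
    and win: "\<forall>t. t + k \<le> N \<longrightarrow> S \<inter> {t..<t+k} \<noteq> {}"
  shows "t + j*k \<le> N \<Longrightarrow> card (S \<inter> {..<t+j*k}) \<ge> card (S \<inter> {..<t}) + j"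
proof (induction j)
  case 0 then show ?case by simp
next
  case (Suc j)
  let ?a = "t + j*k"
  have le: "?a + k \<le> N" using Suc.prems by simp
  have IH: "card (S \<inter> {..<?a}) \<ge> card (S \<inter> {..<t}) + j" using Suc.IH le by simp
  have split: "S \<inter> {..<?a + k} = (S \<inter> {..<?a}) \<union> (S \<inter> {?a..<?a+k})" by auto
  have disj: "(S \<inter> {..<?a}) \<inter> (S \<inter> {?a..<?a+k}) = {}" by auto
  have c: "card (S \<inter> {..<?a + k}) = card (S \<inter> {..<?a}) + card (S \<inter> {?a..<?a+k})"
    unfolding split using fin disj by (simp add: card_Un_disjoint)
  have "S \<inter> {?a..<?a+k} \<noteq> {}" using win le by blast
  then have one: "card (S \<inter> {?a..<?a+k}) \<ge> 1" using fin
    by (simp add: Suc_leI card_gt_0_iff)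
  have eq: "t + Suc j * k = ?a + k" by simp
  show ?case unfolding eq using c IH one by linarith
qed

lemma ap_of_window:
  fixes t k n :: nat
  assumes "t + k \<le> n" "S \<inter> {t..<t+k} = {}" "k \<ge> 1"
  shows "\<exists>r s. s > 0 \<and> r + s * (k - 1) \<le> n - 1 \<and> (\<forall>i. i \<le> k - 1 \<longrightarrow> r + i * s \<notin> S)"
proof -
  have "\<forall>i. i \<le> k - 1 \<longrightarrow> t + i * 1 \<notin> S"
  proof (intro allI impI)
    fix i assume "i \<le> k - 1"
    then have "i < k" using assms(3) by arith
    then have "t + i * 1 \<in> {t..<t+k}" by simp
    then show "t + i * 1 \<notin> S" using assms(2) by blast
  qed
  moreover have "t + 1 * (k - 1) \<le> n - 1" using assms by simp
  ultimately show ?thesis by blast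
qed

lemma partA:
  assumes "k \<ge> 2"
  shows "ap_avoid k E (k * (E + 1))"
  unfolding ap_avoid_def
proof (intro allI impI)
  fix S assume S: "S \<subseteq> {0..<k * (E + 1)} \<and> card S \<le> E"
  have fin: "finite S" using S finite_subset by blast
  show "\<exists>r s. s > 0 \<and> r + s * (k - 1) \<le> k * (E + 1) - 1 \<and> (\<forall>i. i \<le> k - 1 \<longrightarrow> r + i * s \<notin> S)"
  proof (rule ccontr)
    assume no: "\<not> ?thesis"
    have win: "\<forall>t. t + k \<le> k * (E + 1) \<longrightarrow> S \<inter> {t..<t+k} \<noteq> {}"
    proof (intro allI impI)
      fix t assume a: "t + k \<le> k * (E + 1)"
      show "S \<inter> {t..<t+k} \<noteq> {}"
      proof
        assume e: "S \<inter> {t..<t+k} = {}"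
        have "1 \<le> k" using assms by simp
        from ap_of_window[OF a e this] no show False by blast
      qed
    qed
    have "card (S \<inter> {..<0 + (E+1)*k}) \<ge> card (S \<inter> {..<0}) + (E+1)"
      using window_count[OF fin win, of 0 "E+1"] by (simp add: mult.commute)
    moreover have "card (S \<inter> {..<0 + (E+1)*k}) \<le> card S"
      using fin by (simp add: card_mono)
    ultimately show False using S by simp
  qed
qed

lemma dvd_diff_aux:
  fixes k s r i j :: nat
  assumes "coprime k s" "i < j" "j < k" "(r + i * s) mod k = (r + j * s) mod k"
  shows False
proof -
  have le: "r + i*s \<le> r + j*s" using assms(2) by simp
  have "(r + j*s) mod k = (r + i*s) mod k" using assms(4) by (rule sym)
  then have "k dvd (r + j*s) - (r + i*s)" by (rule iffD1[OF mod_eq_dvd_iff_nat[OF le]])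
  moreover have "(r + j*s) - (r + i*s) = (j - i) * s" using assms(2) by (simp add: diff_mult_distrib)
  ultimately have "k dvd (j - i) * s" by simp
  then have "k dvd (j - i)" using coprime_dvd_mult_left_iff[OF assms(1)] by blast
  moreover have "0 < j - i" "j - i < k" using assms(2,3) by simp_all
  ultimately show False using nat_dvd_not_less by blast
qed

lemma coprime_hit:
  fixes k s r :: nat
  assumes "coprime k s" "k \<ge> 1"
  shows "\<exists>i<k. (r + i * s) mod k = k - 1"
proof -
  let ?f = "\<lambda>i. (r + i * s) mod k"
  have inj: "inj_on ?f {..<k}"
  proof (rule inj_onI)
    fix i j assume i: "i \<in> {..<k}" and j: "j \<in> {..<k}" and eq: "?f i = ?f j"
    show "i = j"
    proof (rule ccontr)
      assume "i \<noteq> j"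
      then consider "i < j" | "j < i" by linarith
      then show False
      proof cases
        case 1
        then show False using dvd_diff_aux[OF assms(1) 1, of r] j eq by simp
      next
        case 2
        then show False using dvd_diff_aux[OF assms(1) 2, of r] i eq by simp
      qed
    qed
  qed
  have sub: "?f ` {..<k} \<subseteq> {..<k}" using assms(2) by auto
  have "card (?f ` {..<k}) = k" using inj by (simp add: card_image)
  then have eqs: "?f ` {..<k} = {..<k}" using sub by (simp add: card_subset_eq)
  have "k - 1 \<in> {..<k}" using assms(2) by simp
  then have "k - 1 \<in> ?f ` {..<k}" using eqs by simp
  then obtain i where i: "i \<in> {..<k}" "k - 1 = ?f i" by (rule imageE)
  from i show ?thesis by auto
qed

lemma spf:
  assumes "k \<ge> 2"
  shows "prime (smallest_prime_factor k)" "smallest_prime_factor k dvd k"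
    "\<And>p. prime p \<Longrightarrow> p dvd k \<Longrightarrow> smallest_prime_factor k \<le> p"
proof -
  obtain p where p: "prime p" "p dvd k" using prime_factor_nat[of k] assms by auto
  have "prime (smallest_prime_factor k) \<and> smallest_prime_factor k dvd k"
    unfolding smallest_prime_factor_def by (rule LeastI[of _ p]) (use p in auto)
  then show "prime (smallest_prime_factor k)" "smallest_prime_factor k dvd k" by auto
  show "\<And>p. prime p \<Longrightarrow> p dvd k \<Longrightarrow> smallest_prime_factor k \<le> p"
    unfolding smallest_prime_factor_def by (rule Least_le) auto
qed

lemma partB:
  assumes k2: "k \<ge> 2" and g: "E + 2 \<le> smallest_prime_factor k"
    and n: "0 < n" "n < k * (E + 1)"
  shows "\<not> ap_avoid k E n"
proof
  assume av: "ap_avoid k E n"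
  define S where "S = (\<lambda>j. j*k + (k-1)) ` {..<E} \<inter> {0..<n}"
  have cS: "card S \<le> E"
  proof -
    have "card S \<le> card ((\<lambda>j. j*k + (k-1)) ` {..<E})" unfolding S_def
      by (rule card_mono) auto
    also have "\<dots> \<le> E" using card_image_le[of "{..<E}"] by simp
    finally show ?thesis .
  qed
  have "S \<subseteq> {0..<n}" unfolding S_def by auto
  then obtain r s where rs: "s > 0" "r + s * (k - 1) \<le> n - 1"
    and av2: "\<forall>i. i \<le> k - 1 \<longrightarrow> r + i * s \<notin> S"
    using av cS unfolding ap_avoid_def by blast
  have gp: "prime (smallest_prime_factor k)" and kge: "smallest_prime_factor k \<le> k"
    using spf[OF k2] k2 by (auto intro: dvd_imp_le)
  show False
  proof (cases "coprime k s")
    case True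
    obtain i where i: "i < k" "(r + i*s) mod k = k - 1" using coprime_hit[OF True] k2 by force
    have ik: "i \<le> k - 1" using i by arith
    have "i * s \<le> (k-1) * s" using ik by (simp add: mult_le_mono1)
    moreover have "(k-1)*s = s*(k-1)" by simp
    ultimately have lt: "r + i*s < n" using rs n by linarith
    define q where "q = (r + i*s) div k"
    have x: "r + i*s = q*k + (k-1)" using i unfolding q_def by (metis div_mult_mod_eq)
    have "q*k + (k-1) \<le> k*(E+1) - 2" using lt x n by linarith
    moreover have "k*(E+1) = E*k + k" by (simp add: algebra_simps)
    ultimately have "q*k < E*k" using k2 by linarith
    then have "q < E" by simp
    then have "r + i*s \<in> S" unfolding S_def using x lt by auto
    then show False using av2 ik by blast
  next
    case False
    then obtain c where c: "c dvd k" "c dvd s" "\<not> is_unit c" by (rule not_coprimeE)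
    then obtain p where p: "prime p" "p dvd c" using prime_factor_nat[of c] by auto
    have "p dvd k" "p dvd s" using p c dvd_trans by blast+
    then have "smallest_prime_factor k \<le> p" "p \<le> s" using spf(3)[OF k2] p rs(1) dvd_imp_le by auto
    then have s: "s \<ge> E + 2" using g by simp
    have kE: "k \<ge> E + 2" using g kge by simp
    obtain m where km: "k = Suc m" using k2 by (cases k) auto
    have m: "m \<ge> E + 1" using kE km by simp
    have "(E+2) * m \<le> s * m" using s by (rule mult_le_mono1)
    moreover have "(E+2)*m = E*m + 2*m" by (simp add: algebra_simps)
    moreover have "s * (k - 1) = s * m" using km by simp
    moreover have "k * (E+1) = E*m + m + E + 1" using km by (simp add: algebra_simps)
    ultimately show False using rs n m by linarith
  qed
qed

lemma partC:
  assumes k2: "k \<ge> 2" and g: "smallest_prime_factor k \<le> E + 1"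
  shows "ap_avoid k E (k * (E + 1) - 1)"
  unfolding ap_avoid_def
proof (intro allI impI)
  define N where "N = k * (E + 1) - 1"
  have Neq: "N = E*k + (k - 1)" unfolding N_def using k2 by (simp add: algebra_simps)
  fix S assume S: "S \<subseteq> {0..<k * (E + 1) - 1} \<and> card S \<le> E"
  have fin: "finite S" using S finite_subset by blast
  have SN: "S \<subseteq> {0..<N}" using S N_def by simp
  let ?f = "\<lambda>u. card (S \<inter> {..<u})"
  show "\<exists>r s. s > 0 \<and> r + s * (k - 1) \<le> k * (E + 1) - 1 - 1 \<and> (\<forall>i. i \<le> k - 1 \<longrightarrow> r + i * s \<notin> S)"
  proof (rule ccontr)
    assume no: "\<not> ?thesis"
    have win: "\<forall>t. t + k \<le> N \<longrightarrow> S \<inter> {t..<t+k} \<noteq> {}"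
    proof (intro allI impI)
      fix t assume a: "t + k \<le> N"
      show "S \<inter> {t..<t+k} \<noteq> {}"
      proof
        assume e: "S \<inter> {t..<t+k} = {}"
        have "1 \<le> k" using assms by simp
        from ap_of_window[OF a e this] no show False unfolding N_def by blast
      qed
    qed
    have fval: "?f (t + j*k) = j" if t: "t \<le> k - 1" and j: "j \<le> E" for t j
    proof -
      have "j*k + (E-j)*k = (j + (E - j))*k" by (simp only: add_mult_distrib)
      also have "j + (E - j) = E" using j by simp
      finally have "t + j*k + (E - j)*k = t + E*k" by simp
      then have "t + j*k + (E - j)*k \<le> N" using t Neq by simp
      then have "?f (t + j*k + (E-j)*k) \<ge> ?f (t + j*k) + (E - j)"
        using window_count[OF fin win] by blast
      moreover have "?f (t + j*k + (E-j)*k) \<le> card S" using fin by (simp add: card_mono)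
      moreover have "t + j*k \<le> N" using \<open>t + j*k + (E - j)*k \<le> N\<close> by simp
      then have "?f (t + j*k) \<ge> ?f t + j" using window_count[OF fin win] by blast
      ultimately show ?thesis using S j by linarith
    qed
    have modS: "x mod k = k - 1" if x: "x \<in> S" for x
    proof (rule ccontr)
      assume ne: "x mod k \<noteq> k - 1"
      have xN: "x < N" using x SN by auto
      have c: "x mod k < k" using k2 by simp
      then have c1: "x mod k + 1 \<le> k - 1" using ne by arith
      have xe: "x = x mod k + (x div k) * k" by simp
      have "(x div k) * k \<le> x" by simp
      have jE: "x div k \<le> E"
      proof (rule ccontr)
        assume "\<not> x div k \<le> E"
        then have "Suc E \<le> x div k" by simp
        then have "Suc E * k \<le> (x div k) * k" by (rule mult_le_mono1)
        moreover have "Suc E * k = E * k + k" by simp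
        ultimately show False using xN Neq \<open>(x div k) * k \<le> x\<close> k2 by linarith
      qed
      have f1: "?f x = x div k" using fval[of "x mod k" "x div k"] c1 jE xe by simp
      have f2: "?f (x + 1) = x div k" using fval[of "x mod k + 1" "x div k"] c1 jE xe
        by (metis add.commute add.left_commute)
      have "S \<inter> {..<x+1} = insert x (S \<inter> {..<x})" using x by auto
      then have "?f (x+1) = ?f x + 1" using fin by simp
      then show False using f1 f2 by simp
    qed
    define gg where "gg = smallest_prime_factor k"
    have gp: "prime gg" "gg dvd k" using spf[OF k2] gg_def by auto
    have g2: "gg \<ge> 2" using gp prime_ge_2_nat by blast
    have F1: "\<forall>i. i \<le> k - 1 \<longrightarrow> 0 + i * gg \<notin> S"
    proof (intro allI impI notI)
      fix i assume "i \<le> k - 1" "0 + i * gg \<in> S"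
      then have m: "(i*gg) mod k = k - 1" using modS by simp
      have "(i*gg) mod k mod gg = 0" using gp(2) by (simp add: mod_mod_cancel)
      then have "gg dvd k - 1" using m by (simp add: mod_eq_0_iff_dvd)
      then have "gg dvd k - (k - 1)" using gp(2) by (simp add: dvd_diff_nat)
      then have "gg dvd 1" using k2 by simp
      then show False using g2 by simp
    qed
    have F2: "0 + gg * (k - 1) \<le> k * (E + 1) - 1 - 1"
    proof -
      obtain m where km: "k = Suc m" using k2 by (cases k) auto
      have "gg * m \<le> (E+1) * m" using g unfolding gg_def by (rule mult_le_mono1)
      moreover have "k * (E+1) = E*m + m + E + 1" using km by (simp add: algebra_simps)
      moreover have "(E+1)*m = E*m + m" by simp
      moreover have "gg * (k - 1) = gg * m" using km by simp
      moreover have "E \<ge> 1" using g2 g gg_def by simp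
      ultimately show ?thesis by linarith
    qed
    have F3: "gg > 0" using g2 by simp
    have "\<exists>r s. s > 0 \<and> r + s * (k - 1) \<le> k * (E + 1) - 1 - 1 \<and> (\<forall>i. i \<le> k - 1 \<longrightarrow> r + i * s \<notin> S)"
    proof -
      have "0 < gg \<and> 0 + gg * (k - 1) \<le> k * (E + 1) - 1 - 1 \<and> (\<forall>i. i \<le> k - 1 \<longrightarrow> 0 + i * gg \<notin> S)"
        using F1 F2 F3 by (intro conjI)
      then show ?thesis by (rule exI[of _ 0, OF exI[of _ gg]])
    qed
    then show False using no by (rule notE[rotated])
  qed
qed

theorem lemma2:
  fixes k E :: nat
  assumes "k \<ge> 2" and "E \<ge> 1"
  shows "n_kE k E \<le> k * (E + 1) \<and>
         (n_kE k E = k * (E + 1) \<longleftrightarrow> E + 2 \<le> smallest_prime_factor k)"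
proof -
  have pos: "k * (E + 1) > 0" using assms by simp
  have A: "n_kE k E \<le> k * (E + 1)" unfolding n_kE_def
    by (rule Least_le, rule conjI[OF pos partA[OF assms(1)]])
  have B: "n_kE k E = k * (E + 1)" if g: "E + 2 \<le> smallest_prime_factor k"
    unfolding n_kE_def
  proof (rule Least_equality)
    show "0 < k * (E + 1) \<and> ap_avoid k E (k * (E + 1))" by (rule conjI[OF pos partA[OF assms(1)]])
    fix y assume yp: "0 < y \<and> ap_avoid k E y"
    show "k * (E + 1) \<le> y"
    proof (rule ccontr)
      assume "\<not> k * (E + 1) \<le> y"
      then have "y < k * (E + 1)" by simp
      then have "\<not> ap_avoid k E y" using partB[OF assms(1) g, of y] yp by simp
      then show False using yp by simp
    qed
  qed
  have C: "n_kE k E \<noteq> k * (E + 1)" if g: "\<not> E + 2 \<le> smallest_prime_factor k"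
  proof -
    have g': "smallest_prime_factor k \<le> E + 1" using g by simp
    have p1: "k * (E + 1) - 1 > 0" using assms by (simp add: algebra_simps)
    have "n_kE k E \<le> k * (E + 1) - 1" unfolding n_kE_def
      by (rule Least_le, rule conjI[OF p1 partC[OF assms(1) g']])
    then show ?thesis using pos by linarith
  qed
  show ?thesis
  proof (intro conjI iffI)
    show "n_kE k E \<le> k * (E + 1)" by (rule A)
    show "E + 2 \<le> smallest_prime_factor k" if "n_kE k E = k * (E + 1)"
      using C that by (cases "E + 2 \<le> smallest_prime_factor k") auto
    show "n_kE k E = k * (E + 1)" if "E + 2 \<le> smallest_prime_factor k" using B that .
  qed
qed

end
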